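(* Let $f$ be a nonzero polynomial and write its multiset of reproducible zeros as $$R(f)=\{\underbrace{\beta_1,\dots,\beta_1}_{r_1},\underbrace{\beta_2,\dots,\beta_2}_{r_2},\dots,\underbrace{\beta_n,\dots,\beta_n}_{r_n}\}$$ with $\beta_1,\dots,\beta_n$ distinct. Then $$[f]=\Big[\prod_{\beta\in R(f)}(z-\beta)\Big]=\Big(\operatorname{span}\big\{k_{\beta_j}^{(\ell)}:0\le\ell\le r_j-1,\ 1\le j\le n\big\}\Big)^{\perp},$$ where the product is taken over $R(f)$ with multiplicity (and equals $1$ if $R(f)$ is empty).
   Context: Standing assumptions: $\Omega\subset\mathbb C$ is a domain with $0\in\Omega$, $\mathcal H$ is a Hilbert space of analytic functions on $\Omega$ with bounded point evaluations at points of $\Omega$, the shift $(Sf)(z)=zf(z)$ is bounded on $\mathcal H$, and the polynomials $\mathcal P$ are dense in $\mathcal H$. For $g\in\mathcal H$, $[g]$ is the closure in $\mathcal H$ of $\operatorname{span}\{z^kg:k\ge0\}$. A point $\beta\in\mathbb C$ is reproducible of order $m\ge0$ if $p\mapsto p^{(m)}(\beta)$ on $\mathcal P$ extends to a bounded linear functional on $\mathcal H$; $k_\beta^{(m)}\in\mathcal H$ is the element representing this extension, $\langle g,k_\beta^{(m)}\rangle=g^{(m)}(\beta)$. $\beta$ is a reproducible point if reproducible of order $0$; reproducibility of order $m$ implies that of all orders $j\le m$; $\operatorname{ro}(\beta)\in\{0,1,\dots\}\cup\{\infty\}$ is the supremum of orders of reproducibility. For a nonzero polynomial $p$, $R(p)$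 is the multiset of reproducible zeros: each reproducible point $\beta$ at which $p$ has a zero of order $m\ge1$ is listed $\min\{m,\operatorname{ro}(\beta)+1\}$ times; non-reproducible zeros are omitted. *)

theory Defs
  imports "HOL-Analysis.Analysis" "HOL-Computational_Algebra.Polynomial"
          "HOL-Library.Multiset" "HOL-Library.Extended_Nat"
begin

text \<open>Elements of the Hilbert space are functions complex => complex that are
  holomorphic on Omega and vanish outside Omega (so that each analytic function on
  Omega has a unique representative).\<close>

definition restr :: "complex set \<Rightarrow> (complex \<Rightarrow> complex) \<Rightarrow> complex \<Rightarrow> complex" where
  "restr \<Omega> g = (\<lambda>z. if z \<in> \<Omega> then g z else 0)"

definition hnorm :: "((complex \<Rightarrow> complex) \<Rightarrow> (complex \<Rightarrow> complex) \<Rightarrow> complex)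
    \<Rightarrow> (complex \<Rightarrow> complex) \<Rightarrow> real" where
  "hnorm ip g = sqrt (Re (ip g g))"

definition hdist :: "((complex \<Rightarrow> complex) \<Rightarrow> (complex \<Rightarrow> complex) \<Rightarrow> complex)
    \<Rightarrow> (complex \<Rightarrow> complex) \<Rightarrow> (complex \<Rightarrow> complex) \<Rightarrow> real" where
  "hdist ip g h = hnorm ip (\<lambda>z. g z - h z)"

definition AHS :: "complex set \<Rightarrow> (complex \<Rightarrow> complex) set
    \<Rightarrow> ((complex \<Rightarrow> complex) \<Rightarrow> (complex \<Rightarrow> complex) \<Rightarrow> complex) \<Rightarrow> bool" where
  "AHS \<Omega> H ip \<longleftrightarrow>
     open \<Omega> \<and> connected \<Omega> \<and> 0 \<in> \<Omega> \<and>
     (\<forall>g\<in>H. g holomorphic_on \<Omega> \<and> (\<forall>z. z \<notin> \<Omega> \<longrightarrow> g z = 0)) \<and>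
     (\<lambda>z. 0) \<in> H \<and>
     (\<forall>g\<in>H. \<forall>h\<in>H. (\<lambda>z. g z + h z) \<in> H) \<and>
     (\<forall>g\<in>H. \<forall>c. (\<lambda>z. c * g z) \<in> H) \<and>
     (\<forall>g\<in>H. \<forall>h\<in>H. \<forall>k\<in>H. ip (\<lambda>z. g z + h z) k = ip g k + ip h k) \<and>
     (\<forall>g\<in>H. \<forall>k\<in>H. \<forall>c. ip (\<lambda>z. c * g z) k = c * ip g k) \<and>
     (\<forall>g\<in>H. \<forall>k\<in>H. ip k g = cnj (ip g k)) \<and>
     (\<forall>g\<in>H. 0 \<le> Re (ip g g)) \<and>
     (\<forall>g\<in>H. ip g g = 0 \<longrightarrow> g = (\<lambda>z. 0)) \<and>
     \<comment> \<open>completeness\<close>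
     (\<forall>s. (\<forall>n. s n \<in> H) \<longrightarrow>
          (\<forall>e>0. \<exists>N. \<forall>m\<ge>N. \<forall>n\<ge>N. hdist ip (s m) (s n) < e) \<longrightarrow>
          (\<exists>g\<in>H. (\<lambda>n. hdist ip (s n) g) \<longlonglongrightarrow> 0)) \<and>
     \<comment> \<open>bounded point evaluations at points of Omega\<close>
     (\<forall>w\<in>\<Omega>. \<exists>C. \<forall>g\<in>H. cmod (g w) \<le> C * hnorm ip g) \<and>
     \<comment> \<open>bounded shift\<close>
     (\<forall>g\<in>H. (\<lambda>z. z * g z) \<in> H) \<and>
     (\<exists>C. \<forall>g\<in>H. hnorm ip (\<lambda>z. z * g z) \<le> C * hnorm ip g) \<and>
     \<comment> \<open>polynomials belong to H and are dense\<close>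
     (\<forall>p. restr \<Omega> (poly p) \<in> H) \<and>
     (\<forall>g\<in>H. \<forall>e>0. \<exists>p. hdist ip g (restr \<Omega> (poly p)) < e)"

definition hclosure :: "(complex \<Rightarrow> complex) set
    \<Rightarrow> ((complex \<Rightarrow> complex) \<Rightarrow> (complex \<Rightarrow> complex) \<Rightarrow> complex)
    \<Rightarrow> (complex \<Rightarrow> complex) set \<Rightarrow> (complex \<Rightarrow> complex) set" where
  "hclosure H ip A = {g \<in> H. \<forall>e>0. \<exists>h\<in>A. hdist ip g h < e}"

definition fspan :: "(complex \<Rightarrow> complex) set \<Rightarrow> (complex \<Rightarrow> complex) set" where
  "fspan A = {h. \<exists>(n::nat) (c::nat \<Rightarrow> complex) g. (\<forall>i<n. g i \<in> A) \<and>
                  h = (\<lambda>z. \<Sum>i<n. c i * g i z)}"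

definition perp :: "(complex \<Rightarrow> complex) set
    \<Rightarrow> ((complex \<Rightarrow> complex) \<Rightarrow> (complex \<Rightarrow> complex) \<Rightarrow> complex)
    \<Rightarrow> (complex \<Rightarrow> complex) set \<Rightarrow> (complex \<Rightarrow> complex) set" where
  "perp H ip A = {g \<in> H. \<forall>k\<in>A. ip g k = 0}"

definition cyc :: "(complex \<Rightarrow> complex) set
    \<Rightarrow> ((complex \<Rightarrow> complex) \<Rightarrow> (complex \<Rightarrow> complex) \<Rightarrow> complex)
    \<Rightarrow> (complex \<Rightarrow> complex) \<Rightarrow> (complex \<Rightarrow> complex) set" where
  "cyc H ip g = hclosure H ip (fspan {(\<lambda>z. z ^ k * g z) | k::nat. True})"

definition reproducible :: "complex set \<Rightarrow> ((complex \<Rightarrow> complex) \<Rightarrow> (complex \<Rightarrow> complex) \<Rightarrow> complex)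
    \<Rightarrow> nat \<Rightarrow> complex \<Rightarrow> bool" where
  "reproducible \<Omega> ip m \<beta> \<longleftrightarrow>
     (\<exists>C. \<forall>p. cmod (poly ((pderiv ^^ m) p) \<beta>) \<le> C * hnorm ip (restr \<Omega> (poly p)))"

definition kern :: "complex set \<Rightarrow> (complex \<Rightarrow> complex) set
    \<Rightarrow> ((complex \<Rightarrow> complex) \<Rightarrow> (complex \<Rightarrow> complex) \<Rightarrow> complex)
    \<Rightarrow> nat \<Rightarrow> complex \<Rightarrow> (complex \<Rightarrow> complex)" where
  "kern \<Omega> H ip m \<beta> = (SOME k. k \<in> H \<and>
       (\<forall>p. ip (restr \<Omega> (poly p)) k = poly ((pderiv ^^ m) p) \<beta>))"

definition ro :: "complex set \<Rightarrow> ((complex \<Rightarrow> complex) \<Rightarrow> (complex \<Rightarrow> complex) \<Rightarrow> complex)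
    \<Rightarrow> complex \<Rightarrow> enat" where
  "ro \<Omega> ip \<beta> = (SUP m\<in>{m. reproducible \<Omega> ip m \<beta>}. enat m)"

definition rmult :: "complex set \<Rightarrow> ((complex \<Rightarrow> complex) \<Rightarrow> (complex \<Rightarrow> complex) \<Rightarrow> complex)
    \<Rightarrow> complex poly \<Rightarrow> complex \<Rightarrow> nat" where
  "rmult \<Omega> ip p \<beta> =
     (if reproducible \<Omega> ip 0 \<beta> \<and> order \<beta> p \<ge> 1
      then the_enat (min (enat (order \<beta> p)) (ro \<Omega> ip \<beta> + 1)) else 0)"

definition Rz :: "complex set \<Rightarrow> ((complex \<Rightarrow> complex) \<Rightarrow> (complex \<Rightarrow> complex) \<Rightarrow> complex)
    \<Rightarrow> complex poly \<Rightarrow> complex multiset" where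
  "Rz \<Omega> ip p = (\<Sum>\<beta>\<in>{x. poly p x = 0}. replicate_mset (rmult \<Omega> ip p \<beta>) \<beta>)"

end

theory Submission
  imports Defs "HOL-Computational_Algebra.Fundamental_Theorem_Algebra"
begin


locale ahs =
  fixes Om :: "complex set" and H :: "(complex \<Rightarrow> complex) set"
    and ip :: "(complex \<Rightarrow> complex) \<Rightarrow> (complex \<Rightarrow> complex) \<Rightarrow> complex"
  assumes AHS: "AHS Om H ip"
begin

abbreviation nrm where "nrm g \<equiv> hnorm ip g"

lemma parts_1: "open Om"
  using AHS unfolding AHS_def by (elim conjE) assumption
lemma parts_2: "connected Om"
  using AHS unfolding AHS_def by (elim conjE) assumption
lemma parts_3: "0 \<in> Om"
  using AHS unfolding AHS_def by (elim conjE) assumption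
lemma parts_4: "\<forall>g\<in>H. g holomorphic_on Om \<and> (\<forall>z. z \<notin> Om \<longrightarrow> g z = 0)"
  using AHS unfolding AHS_def by (elim conjE) assumption
lemma parts_5: "(\<lambda>z. 0) \<in> H"
  using AHS unfolding AHS_def by (elim conjE) assumption
lemma parts_6: "\<forall>g\<in>H. \<forall>h\<in>H. (\<lambda>z. g z + h z) \<in> H"
  using AHS unfolding AHS_def by (elim conjE) assumption
lemma parts_7: "\<forall>g\<in>H. \<forall>c. (\<lambda>z. c * g z) \<in> H"
  using AHS unfolding AHS_def by (elim conjE) assumption
lemma parts_8: "\<forall>g\<in>H. \<forall>h\<in>H. \<forall>k\<in>H. ip (\<lambda>z. g z + h z) k = ip g k + ip h k"
  using AHS unfolding AHS_def by (elim conjE) assumption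
lemma parts_9: "\<forall>g\<in>H. \<forall>k\<in>H. \<forall>c. ip (\<lambda>z. c * g z) k = c * ip g k"
  using AHS unfolding AHS_def by (elim conjE) assumption
lemma parts_10: "\<forall>g\<in>H. \<forall>k\<in>H. ip k g = cnj (ip g k)"
  using AHS unfolding AHS_def by (elim conjE) assumption
lemma parts_11: "\<forall>g\<in>H. 0 \<le> Re (ip g g)"
  using AHS unfolding AHS_def by (elim conjE) assumption
lemma parts_12: "\<forall>g\<in>H. ip g g = 0 \<longrightarrow> g = (\<lambda>z. 0)"
  using AHS unfolding AHS_def by (elim conjE) assumption
lemma parts_13: "\<forall>s. (\<forall>n. s n \<in> H) \<longrightarrow>
          (\<forall>e>0. \<exists>N. \<forall>m\<ge>N. \<forall>n\<ge>N. hdist ip (s m) (s n) < e) \<longrightarrow>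
          (\<exists>g\<in>H. (\<lambda>n. hdist ip (s n) g) \<longlonglongrightarrow> 0)"
  using AHS unfolding AHS_def by (elim conjE) assumption
lemma parts_14: "\<forall>w\<in>Om. \<exists>C. \<forall>g\<in>H. cmod (g w) \<le> C * hnorm ip g"
  using AHS unfolding AHS_def by (elim conjE) assumption
lemma parts_15: "\<forall>g\<in>H. (\<lambda>z. z * g z) \<in> H"
  using AHS unfolding AHS_def by (elim conjE) assumption
lemma parts_16: "\<exists>C. \<forall>g\<in>H. hnorm ip (\<lambda>z. z * g z) \<le> C * hnorm ip g"
  using AHS unfolding AHS_def by (elim conjE) assumption
lemma parts_17: "\<forall>p. restr Om (poly p) \<in> H"
  using AHS unfolding AHS_def by (elim conjE) assumption
lemma parts_18: "\<forall>g\<in>H. \<forall>e>0. \<exists>p. hdist ip g (restr Om (poly p)) < e"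
  using AHS unfolding AHS_def by (elim conjE) assumption
lemmas parts = parts_1 parts_2 parts_3 parts_4 parts_5 parts_6 parts_7 parts_8 parts_9 parts_10 parts_11 parts_12 parts_13 parts_14 parts_15 parts_16 parts_17 parts_18


lemma H0: "(\<lambda>z. 0) \<in> H" using parts by blast
lemma Hadd: "g \<in> H \<Longrightarrow> h \<in> H \<Longrightarrow> (\<lambda>z. g z + h z) \<in> H" using parts(6) by blast
lemma Hsc: "g \<in> H \<Longrightarrow> (\<lambda>z. c * g z) \<in> H" using parts(7) by blast
lemma Hout: "g \<in> H \<Longrightarrow> z \<notin> Om \<Longrightarrow> g z = 0" using parts(4) by blast
lemma ip_add1: "g \<in> H \<Longrightarrow> h \<in> H \<Longrightarrow> k \<in> H \<Longrightarrow> ip (\<lambda>z. g z + h z) k = ip g k + ip h k"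
  using parts(8) by blast
lemma ip_sc1: "g \<in> H \<Longrightarrow> k \<in> H \<Longrightarrow> ip (\<lambda>z. c * g z) k = c * ip g k"
  using parts(9) by blast
lemma ip_cnj: "g \<in> H \<Longrightarrow> k \<in> H \<Longrightarrow> ip k g = cnj (ip g k)"
  using parts(10) by blast
lemma ip_pos: "g \<in> H \<Longrightarrow> 0 \<le> Re (ip g g)" using parts(11) by blast
lemma ip_zero: "g \<in> H \<Longrightarrow> ip g g = 0 \<Longrightarrow> g = (\<lambda>z. 0)" using parts(12) by blast
lemma complete: "(\<And>n. s n \<in> H) \<Longrightarrow> (\<forall>e>0. \<exists>N. \<forall>m\<ge>N. \<forall>n\<ge>N. hdist ip (s m) (s n) < e) \<Longrightarrow>
          (\<exists>g\<in>H. (\<lambda>n. hdist ip (s n) g) \<longlonglongrightarrow> 0)" using parts(13) by blast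
lemma Hshift: "g \<in> H \<Longrightarrow> (\<lambda>z. z * g z) \<in> H" using parts(15) by blast
lemma shift_bound: "\<exists>C\<ge>0. \<forall>g\<in>H. nrm (\<lambda>z. z * g z) \<le> C * nrm g"
proof -
  obtain C where C: "\<forall>g\<in>H. nrm (\<lambda>z. z * g z) \<le> C * nrm g" using parts(16) by blast
  have "\<forall>g\<in>H. nrm (\<lambda>z. z * g z) \<le> max C 0 * nrm g"
  proof
    fix g assume g: "g \<in> H"
    have "0 \<le> nrm g" unfolding hnorm_def using ip_pos[OF g] by simp
    hence "C * nrm g \<le> max C 0 * nrm g" by (simp add: mult_right_mono)
    thus "nrm (\<lambda>z. z * g z) \<le> max C 0 * nrm g" using C g by force
  qed
  thus ?thesis by (intro exI[of _ "max C 0"]) simp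
qed
lemma rp_H: "restr Om (poly p) \<in> H" using parts(17) by blast
lemma dense: "g \<in> H \<Longrightarrow> e > 0 \<Longrightarrow> \<exists>p. hdist ip g (restr Om (poly p)) < e"
  using parts(18) by blast
lemma zero_Om: "0 \<in> Om" and open_Om: "open Om" using parts by blast+

lemma Hsub: "g \<in> H \<Longrightarrow> h \<in> H \<Longrightarrow> (\<lambda>z. g z - h z) \<in> H"
proof -
  assume g: "g \<in> H" and h: "h \<in> H"
  have "(\<lambda>z. g z + (-1) * h z) \<in> H" by (rule Hadd[OF g Hsc[OF h]])
  thus ?thesis by simp
qed

lemma ip_sub1: "g \<in> H \<Longrightarrow> h \<in> H \<Longrightarrow> k \<in> H \<Longrightarrow> ip (\<lambda>z. g z - h z) k = ip g k - ip h k"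
proof -
  assume g: "g \<in> H" and h: "h \<in> H" and k: "k \<in> H"
  have "ip (\<lambda>z. g z + (-1) * h z) k = ip g k + ip (\<lambda>z. (-1) * h z) k" by (rule ip_add1[OF g Hsc[OF h] k])
  moreover have "ip (\<lambda>z. (-1) * h z) k = (-1) * ip h k" by (rule ip_sc1[OF h k])
  ultimately show ?thesis by simp
qed

lemma ip_add2: "g \<in> H \<Longrightarrow> h \<in> H \<Longrightarrow> k \<in> H \<Longrightarrow> ip k (\<lambda>z. g z + h z) = ip k g + ip k h"
  by (simp add: ip_cnj[of _ k] Hadd ip_add1)
lemma ip_sub2: "g \<in> H \<Longrightarrow> h \<in> H \<Longrightarrow> k \<in> H \<Longrightarrow> ip k (\<lambda>z. g z - h z) = ip k g - ip k h"
  by (simp add: ip_cnj[of _ k] Hsub ip_sub1)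
lemma ip_sc2: "g \<in> H \<Longrightarrow> k \<in> H \<Longrightarrow> ip k (\<lambda>z. c * g z) = cnj c * ip k g"
  by (simp add: ip_cnj[of _ k] Hsc ip_sc1)
lemma ip_01: "k \<in> H \<Longrightarrow> ip (\<lambda>z. 0) k = 0"
  using ip_sc1[OF H0, of k 0] by simp
lemma ip_02: "k \<in> H \<Longrightarrow> ip k (\<lambda>z. 0) = 0"
  using ip_sc2[OF H0, of k 0] by simp

lemma ip_self_real: "g \<in> H \<Longrightarrow> ip g g = complex_of_real (Re (ip g g))"
proof -
  assume g: "g \<in> H"
  have "ip g g = cnj (ip g g)" using ip_cnj[OF g g] .
  hence "Im (ip g g) = 0" by (metis cnj.simps(2) neg_equal_zero)
  thus ?thesis by (simp add: complex_eq_iff)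
qed

lemma nrm_ge0: "g \<in> H \<Longrightarrow> 0 \<le> nrm g" unfolding hnorm_def by (simp add: ip_pos)
lemma nrm_sq: "g \<in> H \<Longrightarrow> (nrm g)\<^sup>2 = Re (ip g g)" unfolding hnorm_def by (simp add: ip_pos)
lemma ip_self: "g \<in> H \<Longrightarrow> ip g g = complex_of_real ((nrm g)\<^sup>2)"
  using ip_self_real nrm_sq by simp
lemma nrm_0: "nrm (\<lambda>z. 0) = 0" unfolding hnorm_def using ip_01[OF H0] by simp
lemma nrm_eq0: "g \<in> H \<Longrightarrow> nrm g = 0 \<Longrightarrow> g = (\<lambda>z. 0)"
  using ip_self ip_zero by fastforce

lemma nrm_sc: "g \<in> H \<Longrightarrow> nrm (\<lambda>z. c * g z) = cmod c * nrm g"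
proof -
  assume g: "g \<in> H"
  have "ip (\<lambda>z. c * g z) (\<lambda>z. c * g z) = c * cnj c * ip g g"
    using ip_sc1[OF g Hsc[OF g]] ip_sc2[OF g g] by simp
  also have "\<dots> = complex_of_real ((cmod c * nrm g)\<^sup>2)"
    using ip_self[OF g] by (simp add: complex_norm_square[symmetric] power_mult_distrib)
  finally have "(nrm (\<lambda>z. c * g z))\<^sup>2 = (cmod c * nrm g)\<^sup>2"
    using nrm_sq[OF Hsc[OF g]] by simp
  thus ?thesis using nrm_ge0[OF g] nrm_ge0[OF Hsc[OF g]] by (simp add: power2_eq_iff_nonneg)
qed

lemma CS: "g \<in> H \<Longrightarrow> h \<in> H \<Longrightarrow> cmod (ip g h) \<le> nrm g * nrm h"
proof -
  assume g: "g \<in> H" and h: "h \<in> H"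
  define a where "a = ip g h"
  define nh where "nh = (nrm h)\<^sup>2"
  define ng where "ng = (nrm g)\<^sup>2"
  show ?thesis
  proof (cases "nh = 0")
    case True
    hence "h = (\<lambda>z. 0)" using nrm_eq0[OF h] nh_def by simp
    thus ?thesis using ip_02[OF g] nrm_ge0[OF g] nrm_ge0[OF h] by simp
  next
    case False
    hence nhpos: "nh > 0" using nh_def by simp
    define t where "t = a / complex_of_real nh"
    define x where "x = (\<lambda>z. g z - t * h z)"
    have x: "x \<in> H" unfolding x_def by (intro Hsub g Hsc h)
    have "ip x x = ip g x - t * ip h x"
      unfolding x_def[of] using ip_sub1[OF g Hsc[OF h] x] ip_sc1[OF h x] by (simp add: x_def)
    also have "ip g x = ip g g - cnj t * ip g h"
      unfolding x_def using ip_sub2[OF g Hsc[OF h] g] ip_sc2[OF h g] by simp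
    also have "ip h x = ip h g - cnj t * ip h h"
      unfolding x_def using ip_sub2[OF g Hsc[OF h] h] ip_sc2[OF h h] by simp
    finally have "ip x x = of_real ng - cnj t * a - t * (cnj a - cnj t * of_real nh)"
      using ip_self[OF g] ip_self[OF h] ip_cnj[OF g h] unfolding a_def ng_def nh_def by simp
    also have "\<dots> = of_real ng - (a * cnj a) / of_real nh"
      unfolding t_def using False by (simp add: field_simps)
    also have "\<dots> = of_real (ng - (cmod a)\<^sup>2 / nh)"
      using False by (simp add: complex_norm_square[symmetric])
    finally have "0 \<le> ng - (cmod a)\<^sup>2 / nh" using ip_pos[OF x] by simp
    hence "(cmod a)\<^sup>2 \<le> ng * nh" using nhpos by (simp add: field_simps)
    hence "(cmod a)\<^sup>2 \<le> (nrm g * nrm h)\<^sup>2" unfolding ng_def nh_def by (simp add: power_mult_distrib)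
    thus ?thesis using nrm_ge0[OF g] nrm_ge0[OF h] unfolding a_def by (meson mult_nonneg_nonneg power2_le_imp_le)
  qed
qed

lemma nrm_add: "g \<in> H \<Longrightarrow> h \<in> H \<Longrightarrow> nrm (\<lambda>z. g z + h z) \<le> nrm g + nrm h"
proof -
  assume g: "g \<in> H" and h: "h \<in> H"
  have "ip (\<lambda>z. g z + h z) (\<lambda>z. g z + h z) = ip g g + ip g h + (ip h g + ip h h)"
    using ip_add1[OF g h Hadd[OF g h]] ip_add2[OF g h g] ip_add2[OF g h h] by simp
  hence "(nrm (\<lambda>z. g z + h z))\<^sup>2 = (nrm g)\<^sup>2 + (nrm h)\<^sup>2 + 2 * Re (ip g h)"
    using nrm_sq[OF Hadd[OF g h]] ip_self[OF g] ip_self[OF h] ip_cnj[OF g h] by simp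
  also have "\<dots> \<le> (nrm g)\<^sup>2 + (nrm h)\<^sup>2 + 2 * (nrm g * nrm h)"
    using CS[OF g h] complex_Re_le_cmod[of "ip g h"] by linarith
  also have "\<dots> = (nrm g + nrm h)\<^sup>2" by (simp add: power2_sum)
  finally show ?thesis using nrm_ge0[OF g] nrm_ge0[OF h] by (meson add_nonneg_nonneg power2_le_imp_le)
qed

lemma nrm_sub_sym: "g \<in> H \<Longrightarrow> h \<in> H \<Longrightarrow> nrm (\<lambda>z. g z - h z) = nrm (\<lambda>z. h z - g z)"
proof -
  assume g: "g \<in> H" and h: "h \<in> H"
  have "(\<lambda>z. h z - g z) = (\<lambda>z. (-1) * (\<lambda>z. g z - h z) z)" by simp
  thus ?thesis using nrm_sc[OF Hsub[OF g h], of "-1"] by simp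
qed

lemma nrm_sub: "g \<in> H \<Longrightarrow> h \<in> H \<Longrightarrow> nrm (\<lambda>z. g z - h z) \<le> nrm g + nrm h"
proof -
  assume g: "g \<in> H" and h: "h \<in> H"
  have "nrm (\<lambda>z. g z + (-1) * h z) \<le> nrm g + nrm (\<lambda>z. (-1) * h z)" by (rule nrm_add[OF g Hsc[OF h]])
  moreover have "nrm (\<lambda>z. (-1) * h z) = cmod (-1) * nrm h" by (rule nrm_sc[OF h])
  ultimately show ?thesis by simp
qed

lemma nrm_tri: "f \<in> H \<Longrightarrow> g \<in> H \<Longrightarrow> h \<in> H \<Longrightarrow>
   nrm (\<lambda>z. f z - h z) \<le> nrm (\<lambda>z. f z - g z) + nrm (\<lambda>z. g z - h z)"
proof -
  assume f: "f \<in> H" and g: "g \<in> H" and h: "h \<in> H"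
  have "(\<lambda>z. f z - h z) = (\<lambda>z. (\<lambda>z. f z - g z) z + (\<lambda>z. g z - h z) z)" by simp
  thus ?thesis using nrm_add[OF Hsub[OF f g] Hsub[OF g h]] by simp
qed

end


context ahs begin

abbreviation rp where "rp p \<equiv> restr Om (poly p)"

lemma rp_add: "(\<lambda>z. rp p z + rp q z) = rp (p + q)"
  by (auto simp: restr_def fun_eq_iff)
lemma rp_sub: "(\<lambda>z. rp p z - rp q z) = rp (p - q)"
  by (auto simp: restr_def fun_eq_iff)
lemma rp_sc: "(\<lambda>z. c * rp p z) = rp (smult c p)"
  by (auto simp: restr_def fun_eq_iff)
lemma rp_0: "rp 0 = (\<lambda>z. 0)"
  by (auto simp: restr_def fun_eq_iff)
lemma rp_mult: "(\<lambda>z. poly w z * rp q z) = rp (w * q)"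
  by (auto simp: restr_def fun_eq_iff)

lemma mult_H: "x \<in> H \<Longrightarrow> (\<lambda>z. poly w z * x z) \<in> H"
proof (induction w arbitrary: x)
  case (pCons a w)
  have "(\<lambda>z. a * x z + z * (poly w z * x z)) \<in> H"
    by (intro Hadd Hsc Hshift pCons)
  thus ?case by (simp add: algebra_simps)
qed (simp add: H0)

lemma mult_bound: "\<exists>B\<ge>0. \<forall>x\<in>H. nrm (\<lambda>z. poly w z * x z) \<le> B * nrm x"
proof (induction w)
  case 0
  show ?case using nrm_0 by (intro exI[of _ 0]) simp
next
  case (pCons a w)
  obtain B where B: "B \<ge> 0" "\<forall>x\<in>H. nrm (\<lambda>z. poly w z * x z) \<le> B * nrm x" using pCons(2) by blast
  obtain S where S: "S \<ge> 0" "\<forall>g\<in>H. nrm (\<lambda>z. z * g z) \<le> S * nrm g" using shift_bound by blast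
  have "\<forall>x\<in>H. nrm (\<lambda>z. poly (pCons a w) z * x z) \<le> (cmod a + S * B) * nrm x"
  proof
    fix x assume x: "x \<in> H"
    have "(\<lambda>z. poly (pCons a w) z * x z) = (\<lambda>z. a * x z + z * (poly w z * x z))"
      by (simp add: algebra_simps)
    hence "nrm (\<lambda>z. poly (pCons a w) z * x z) \<le> nrm (\<lambda>z. a * x z) + nrm (\<lambda>z. z * (poly w z * x z))"
      using nrm_add[OF Hsc[OF x] Hshift[OF mult_H[OF x]]] by simp
    also have "\<dots> \<le> cmod a * nrm x + S * (B * nrm x)"
    proof -
      have "nrm (\<lambda>z. z * (poly w z * x z)) \<le> S * nrm (\<lambda>z. poly w z * x z)"
        using bspec[OF S(2) mult_H[OF x, of w]] by simp
      also have "\<dots> \<le> S * (B * nrm x)" using B(2) x S(1) by (simp add: mult_left_mono)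
      finally show ?thesis using nrm_sc[OF x] by simp
    qed
    finally show "nrm (\<lambda>z. poly (pCons a w) z * x z) \<le> (cmod a + S * B) * nrm x"
      by (simp add: algebra_simps)
  qed
  thus ?case using B S by (intro exI[of _ "cmod a + S * B"]) simp
qed

definition C where "C p = {g \<in> H. \<forall>e>0. \<exists>q. nrm (\<lambda>z. g z - rp (q * p) z) < e}"

lemma C_H: "C p \<subseteq> H" unfolding C_def by auto

lemma rp_in_C: "rp (q * p) \<in> C p"
proof -
  have "\<exists>s. nrm (\<lambda>z. rp (q * p) z - rp (s * p) z) < e" if "e > 0" for e
    using nrm_0 that by (intro exI[of _ q]) simp
  thus ?thesis unfolding C_def using rp_H by auto
qed

lemma C_mult:
  assumes "rp a \<in> C b" shows "rp (w * a) \<in> C (w * b)"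
proof -
  obtain B where B: "B \<ge> 0" "\<forall>x\<in>H. nrm (\<lambda>z. poly w z * x z) \<le> B * nrm x"
    using mult_bound by blast
  have "\<exists>q. nrm (\<lambda>z. rp (w * a) z - rp (q * (w * b)) z) < e" if e: "e > 0" for e
  proof -
    have "e / (B + 1) > 0" using e B(1) by simp
    then obtain q where q: "nrm (\<lambda>z. rp a z - rp (q * b) z) < e / (B + 1)"
      using assms unfolding C_def by blast
    have "(\<lambda>z. rp (w * a) z - rp (q * (w * b)) z) = (\<lambda>z. poly w z * (\<lambda>z. rp a z - rp (q * b) z) z)"
      by (rule ext) (simp add: restr_def right_diff_distrib mult.left_commute)
    hence "nrm (\<lambda>z. rp (w * a) z - rp (q * (w * b)) z) \<le> B * nrm (\<lambda>z. rp a z - rp (q * b) z)"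
      using B(2) Hsub[OF rp_H rp_H] by simp
    also have "\<dots> \<le> B * (e / (B + 1))" using q B(1) by (intro mult_left_mono) auto
    also have "\<dots> < e" using B(1) e by (simp add: field_simps)
    finally show ?thesis by blast
  qed
  thus ?thesis unfolding C_def using rp_H by auto
qed

lemma C_trans:
  assumes "rp a \<in> C b" shows "C a \<subseteq> C b"
proof
  fix g assume g: "g \<in> C a"
  have gH: "g \<in> H" using g C_H by auto
  have "\<exists>s. nrm (\<lambda>z. g z - rp (s * b) z) < e" if e: "e > 0" for e
  proof -
    have e2: "e / 2 > 0" using e by simp
    then obtain q where q: "nrm (\<lambda>z. g z - rp (q * a) z) < e / 2"
      using g unfolding C_def by blast
    have "rp (q * a) \<in> C (q * b)" by (rule C_mult[OF assms])
    then obtain s where s: "nrm (\<lambda>z. rp (q * a) z - rp (s * (q * b)) z) < e / 2"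
      using e2 unfolding C_def by blast
    have "nrm (\<lambda>z. g z - rp ((s * q) * b) z) \<le> nrm (\<lambda>z. g z - rp (q * a) z) + nrm (\<lambda>z. rp (q * a) z - rp (s * (q * b)) z)"
      using nrm_tri[OF gH rp_H rp_H] by (simp add: mult.assoc)
    also have "\<dots> < e" using q s by simp
    finally show ?thesis by blast
  qed
  thus "g \<in> C b" unfolding C_def using gH by auto
qed

lemma C_smult: assumes "c \<noteq> 0" shows "C (smult c p) = C p"
proof -
  have 1: "rp (smult c p) \<in> C p" using rp_in_C[of "[:c:]" p] by simp
  have 2: "rp p \<in> C (smult c p)" using rp_in_C[of "[:inverse c:]" "smult c p"] assms by simp
  show ?thesis using C_trans[OF 1] C_trans[OF 2] by auto
qed

lemma C_one: "C 1 = H"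
proof
  show "H \<subseteq> C 1"
  proof
    fix g assume g: "g \<in> H"
    have "\<exists>q. nrm (\<lambda>z. g z - rp (q * 1) z) < e" if "e > 0" for e
      using dense[OF g that] unfolding hdist_def by simp
    thus "g \<in> C 1" unfolding C_def using g by auto
  qed
qed (rule C_H)

end


abbreviation E where "E l p b \<equiv> poly ((pderiv ^^ l) p) b"

lemma pd_add: "(pderiv ^^ k) (p + q) = (pderiv ^^ k) p + (pderiv ^^ k) (q :: complex poly)"
  by (induction k) (simp_all add: pderiv_add)
lemma pd_diff: "(pderiv ^^ k) (p - q) = (pderiv ^^ k) p - (pderiv ^^ k) (q :: complex poly)"
  by (induction k) (simp_all add: pderiv_diff)
lemma pd_smult: "(pderiv ^^ k) (smult c p) = smult c ((pderiv ^^ k) (p :: complex poly))"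
  by (induction k) (simp_all add: pderiv_smult)
lemma pd_0: "(pderiv ^^ k) (0 :: complex poly) = 0"
  by (induction k) simp_all

lemma pd_lin_factor0:
  "pderiv X = 1 \<Longrightarrow> pderiv (X ^ Suc m * w) = X ^ m * (smult (of_nat (Suc m)) w + X * pderiv (w :: complex poly))"
  by (simp only: pderiv_mult pderiv_power_Suc) (simp add: algebra_simps)

lemma pd_lin_factor:
  "pderiv ([:-b,1:] ^ Suc m * w) = [:-b,1:] ^ m * (smult (of_nat (Suc m)) w + [:-b,1:] * pderiv (w :: complex poly))"
  by (rule pd_lin_factor0) (simp add: pderiv_pCons)

lemma P1: "E m ([:-b,1:] ^ m * w) b = fact m * poly (w :: complex poly) b"
proof (induction m arbitrary: w)
  case 0 thus ?case by simp
next
  case (Suc m)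
  define w' where "w' = smult (of_nat (Suc m)) w + [:-b,1:] * pderiv w"
  have "(pderiv ^^ Suc m) ([:-b,1:] ^ Suc m * w) = (pderiv ^^ m) (pderiv ([:-b,1:] ^ Suc m * w))"
    by (simp add: funpow_Suc_right del: funpow.simps)
  also have "\<dots> = (pderiv ^^ m) ([:-b,1:] ^ m * w')"
    unfolding w'_def by (simp only: pd_lin_factor)
  finally have "E (Suc m) ([:-b,1:] ^ Suc m * w) b = E m ([:-b,1:] ^ m * w') b" by simp
  also have "\<dots> = fact m * poly w' b" by (rule Suc.IH)
  also have "\<dots> = fact (Suc m) * poly w b" by (simp add: w'_def fact_Suc)
  finally show ?case .
qed

lemma P2: "degree p < k \<Longrightarrow> (pderiv ^^ k) (p :: complex poly) = 0"
proof (induction k arbitrary: p)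
  case 0 thus ?case by simp
next
  case (Suc k)
  have "(pderiv ^^ Suc k) p = (pderiv ^^ k) (pderiv p)"
    by (simp add: funpow_Suc_right del: funpow.simps)
  also have "\<dots> = 0"
  proof (cases "degree p = 0")
    case True
    hence "pderiv p = 0" using pderiv_eq_0_iff by blast
    thus ?thesis by (simp add: pd_0)
  next
    case False thus ?thesis using Suc by (intro Suc.IH) (simp add: degree_pderiv)
  qed
  finally show ?case .
qed

lemma P3: assumes "l < order b f" shows "E l (q * f) b = (0::complex)"
proof -
  have "[:-b,1:] ^ Suc l dvd [:-b,1:] ^ order b f" by (rule le_imp_power_dvd) (use assms in simp)
  hence "[:-b,1:] ^ Suc l dvd f" using order_1 dvd_trans by blast
  then obtain w where w: "f = [:-b,1:] ^ Suc l * w" by (elim dvdE)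
  have eq: "q * f = [:-b,1:] ^ l * ([:-b,1:] * w * q)" unfolding w by (simp add: algebra_simps)
  show ?thesis unfolding eq P1 by simp
qed

lemma split_root: "\<exists>r. s = [:poly s (b::complex):] + [:-b,1:] * (r :: complex poly)"
proof -
  have "poly (s - [:poly s b:]) b = 0" by simp
  then obtain r where "s - [:poly s b:] = [:-b,1:] * r" using poly_eq_0_iff_dvd by (metis dvdE)
  thus ?thesis by (intro exI[of _ r]) (simp add: algebra_simps)
qed

lemma Xid: "s = [:a:] + X * r \<Longrightarrow> X ^ Suc c * r = X ^ c * s - smult a (X ^ c :: complex poly)"
  by (simp add: algebra_simps)

context ahs begin

lemma lemD:
  assumes "\<forall>i<c. reproducible Om ip i b"
  shows "\<exists>D. \<forall>p. \<exists>s t. p = t + [:-b,1:] ^ c * s \<and> (degree t < c \<or> t = 0) \<and>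
            nrm (rp ([:-b,1:] ^ c * s)) \<le> D * nrm (rp p)"
  using assms
proof (induction c)
  case 0
  have "\<exists>s t. p = t + [:-b,1:] ^ 0 * s \<and> (degree t < 0 \<or> t = 0) \<and>
            nrm (rp ([:-b,1:] ^ 0 * s)) \<le> 1 * nrm (rp p)" for p
    by (rule exI[of _ p], rule exI[of _ 0]) simp
  thus ?case by blast
next
  case (Suc c)
  obtain D where D: "\<forall>p. \<exists>s t. p = t + [:-b,1:] ^ c * s \<and> (degree t < c \<or> t = 0) \<and>
            nrm (rp ([:-b,1:] ^ c * s)) \<le> D * nrm (rp p)"
  proof -
    have "\<forall>i<c. reproducible Om ip i b" using Suc.prems by auto
    from Suc.IH[OF this] show ?thesis using that by blast
  qed
  obtain K where K: "\<forall>p. cmod (E c p b) \<le> K * nrm (rp p)"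
    using Suc.prems unfolding reproducible_def by auto
  define D' where "D' = D + K / fact c * nrm (rp ([:-b,1:] ^ c))"
  have "\<exists>s t. p = t + [:-b,1:] ^ Suc c * s \<and> (degree t < Suc c \<or> t = 0) \<and>
            nrm (rp ([:-b,1:] ^ Suc c * s)) \<le> D' * nrm (rp p)" for p
  proof -
    obtain s t where st: "p = t + [:-b,1:] ^ c * s" "degree t < c \<or> t = 0"
      "nrm (rp ([:-b,1:] ^ c * s)) \<le> D * nrm (rp p)" using D by blast
    obtain r where r: "s = [:poly s b:] + [:-b,1:] * r" using split_root by blast
    define t' where "t' = t + smult (poly s b) ([:-b,1:] ^ c)"
    have p: "p = t' + [:-b,1:] ^ Suc c * r" unfolding t'_def
      by (subst st(1), subst r) (simp add: algebra_simps)
    have dt: "degree t' < Suc c \<or> t' = 0"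
    proof -
      have "degree (smult (poly s b) ([:-b,1:] ^ c)) \<le> c" by (simp add: degree_power_eq)
      moreover have "degree t \<le> c" using st(2) by auto
      ultimately have "degree t' \<le> c" unfolding t'_def using degree_add_le by blast
      thus ?thesis by simp
    qed
    have Ec: "E c p b = fact c * poly s b"
    proof -
      have "(pderiv ^^ c) t = 0" using st(2) P2 pd_0 by auto
      thus ?thesis using P1[of c b s] by (simp add: st(1) pd_add)
    qed
    have sb: "cmod (poly s b) \<le> K / fact c * nrm (rp p)"
      using K[rule_format, of p] unfolding Ec by (simp add: norm_mult field_simps)
    have eq: "rp ([:-b,1:] ^ Suc c * r) = (\<lambda>z. rp ([:-b,1:] ^ c * s) z - rp (smult (poly s b) ([:-b,1:] ^ c)) z)"
      unfolding rp_sub using Xid[OF r] by simp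
    have n1: "nrm (rp ([:-b,1:] ^ Suc c * r)) \<le> nrm (rp ([:-b,1:] ^ c * s)) + nrm (rp (smult (poly s b) ([:-b,1:] ^ c)))"
      unfolding eq by (rule nrm_sub[OF rp_H rp_H])
    have n2: "nrm (rp (smult (poly s b) ([:-b,1:] ^ c))) = cmod (poly s b) * nrm (rp ([:-b,1:] ^ c))"
      using nrm_sc[OF rp_H] by (simp add: rp_sc[symmetric])
    have n3: "cmod (poly s b) * nrm (rp ([:-b,1:] ^ c)) \<le> K / fact c * nrm (rp p) * nrm (rp ([:-b,1:] ^ c))"
      using mult_right_mono[OF sb nrm_ge0[OF rp_H]] by simp
    have "nrm (rp ([:-b,1:] ^ Suc c * r)) \<le> nrm (rp ([:-b,1:] ^ c * s)) + K / fact c * nrm (rp p) * nrm (rp ([:-b,1:] ^ c))"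
      using n1 n2 n3 by linarith
    moreover have "D' * nrm (rp p) = D * nrm (rp p) + K / fact c * nrm (rp p) * nrm (rp ([:-b,1:] ^ c))"
      unfolding D'_def by (simp only: algebra_simps)
    ultimately have "nrm (rp ([:-b,1:] ^ Suc c * r)) \<le> D' * nrm (rp p)"
      using st(3) by linarith
    thus ?thesis using p dt by blast
  qed
  thus ?case by blast
qed

end


lemma Xid2: "s = [:a:] + X * r \<Longrightarrow> a \<noteq> 0 \<Longrightarrow>
   X ^ c - smult (-1/a) r * X ^ Suc c = smult (1/a) (X ^ c * s :: complex poly)"
  by (simp add: algebra_simps smult_add_right)

context ahs begin

lemma lemA:
  assumes "\<forall>i<c. reproducible Om ip i b" "\<not> reproducible Om ip c b"
  shows "rp ([:-b,1:] ^ c) \<in> C ([:-b,1:] ^ Suc c)"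
proof (rule ccontr)
  assume nin: "rp ([:-b,1:] ^ c) \<notin> C ([:-b,1:] ^ Suc c)"
  then obtain e where e: "e > 0" "\<forall>q. e \<le> nrm (\<lambda>z. rp ([:-b,1:] ^ c) z - rp (q * [:-b,1:] ^ Suc c) z)"
    unfolding C_def using rp_H by (auto simp: not_less)
  obtain D where D: "\<forall>p. \<exists>s t. p = t + [:-b,1:] ^ c * s \<and> (degree t < c \<or> t = 0) \<and>
            nrm (rp ([:-b,1:] ^ c * s)) \<le> D * nrm (rp p)" using lemD[OF assms(1)] by blast
  have "reproducible Om ip c b"
    unfolding reproducible_def
  proof (intro exI[of _ "fact c * D / e"] allI)
    fix p
    obtain s t where st: "p = t + [:-b,1:] ^ c * s" "degree t < c \<or> t = 0"
      "nrm (rp ([:-b,1:] ^ c * s)) \<le> D * nrm (rp p)" using D by blast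
    have Ec: "E c p b = fact c * poly s b"
    proof -
      have "(pderiv ^^ c) t = 0" using st(2) P2 pd_0 by auto
      thus ?thesis using P1[of c b s] by (simp add: st(1) pd_add)
    qed
    have bound: "cmod (poly s b) * e \<le> nrm (rp ([:-b,1:] ^ c * s))"
    proof (cases "poly s b = 0")
      case True thus ?thesis using nrm_ge0[OF rp_H] by simp
    next
      case False
      obtain r where r: "s = [:poly s b:] + [:-b,1:] * r" using split_root by blast
      have "e \<le> nrm (\<lambda>z. rp ([:-b,1:] ^ c) z - rp (smult (-1 / poly s b) r * [:-b,1:] ^ Suc c) z)"
        using e(2) by blast
      also have "(\<lambda>z. rp ([:-b,1:] ^ c) z - rp (smult (-1 / poly s b) r * [:-b,1:] ^ Suc c) z)
          = (\<lambda>z. (1 / poly s b) * rp ([:-b,1:] ^ c * s) z)"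
        unfolding rp_sub rp_sc Xid2[OF r False] ..
      also have "nrm \<dots> = cmod (1 / poly s b) * nrm (rp ([:-b,1:] ^ c * s))"
        by (rule nrm_sc[OF rp_H])
      finally have "e \<le> nrm (rp ([:-b,1:] ^ c * s)) / cmod (poly s b)" by (simp add: norm_divide)
      thus ?thesis using False by (simp add: field_simps)
    qed
    have "cmod (E c p b) = fact c * cmod (poly s b)" unfolding Ec by (simp add: norm_mult)
    also have "\<dots> \<le> fact c * (D * nrm (rp p) / e)"
      using bound st(3) e(1) by (intro mult_left_mono) (simp_all add: field_simps)
    finally show "cmod (E c p b) \<le> fact c * D / e * nrm (rp p)" by simp
  qed
  with assms(2) show False by simp
qed

lemma lemA':
  assumes "\<forall>i<c. reproducible Om ip i b" "\<not> reproducible Om ip c b" "c \<le> k"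
  shows "rp ([:-b,1:] ^ k) \<in> C ([:-b,1:] ^ Suc k)"
proof -
  have "rp ([:-b,1:] ^ (k - c) * [:-b,1:] ^ c) \<in> C ([:-b,1:] ^ (k - c) * [:-b,1:] ^ Suc c)"
    by (rule C_mult[OF lemA[OF assms(1,2)]])
  moreover have "k - c + c = k" "k - c + Suc c = Suc k" using assms(3) by simp_all
  hence "[:-b,1:] ^ (k - c) * [:-b,1:] ^ c = [:-b,1:] ^ k"
     "[:-b,1:] ^ (k - c) * [:-b,1:] ^ Suc c = [:-b,1:] ^ Suc k"
    by (metis power_add)+
  ultimately show ?thesis by simp
qed

end


abbreviation prodX :: "complex multiset \<Rightarrow> complex poly" where
  "prodX M \<equiv> (\<Prod>x\<in>#M. [:-x, 1:])"

lemma prodX_decomp: "prodX M = [:-g,1:] ^ count M g * prodX {#y \<in># M. y \<noteq> g#}"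
proof -
  have "prodX M = prodX ({#y \<in># M. y = g#} + {#y \<in># M. y \<noteq> g#})"
    using multiset_partition[of M "\<lambda>y. y = g"] by simp
  also have "\<dots> = [:-g,1:] ^ count M g * prodX {#y \<in># M. y \<noteq> g#}"
    by (simp add: filter_eq_replicate_mset)
  finally show ?thesis .
qed

lemma prodX_root: "poly (prodX M) z = 0 \<longleftrightarrow> z \<in># M"
  by (induction M) auto

lemma prodX_nz: "prodX M \<noteq> 0"
  by auto

context ahs begin

definition bp where "bp b c \<longleftrightarrow> (\<forall>i<c. reproducible Om ip i b) \<and> \<not> reproducible Om ip c b"

lemma part_iii:
  "(\<forall>b. count A b < count (A + D) b \<longrightarrow> bp b (count A b)) \<Longrightarrow> rp (prodX A) \<in> C (prodX (A + D))"
proof (induction D)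
  case empty
  show ?case using rp_in_C[of 1 "prodX A"] by simp
next
  case (add g D)
  have IH: "rp (prodX A) \<in> C (prodX (A + D))"
    using add.prems by (intro add.IH) (auto simp: less_Suc_eq)
  have lt: "count A g < count (A + add_mset g D) g" by simp
  hence "bp g (count A g)" using add.prems by blast
  hence g: "\<forall>i<count A g. reproducible Om ip i g" "\<not> reproducible Om ip (count A g) g"
    unfolding bp_def by auto
  define u where "u = prodX {#y \<in># A + D. y \<noteq> g#}"
  have "rp ([:-g,1:] ^ count (A + D) g) \<in> C ([:-g,1:] ^ Suc (count (A + D) g))"
    by (rule lemA'[OF g]) simp
  from C_mult[OF this, of u]
  have "rp (prodX (A + D)) \<in> C ([:-g,1:] * prodX (A + D))"
    unfolding u_def using prodX_decomp[of "A + D" g] by (simp add: algebra_simps)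
  hence "C (prodX (A + D)) \<subseteq> C (prodX (A + add_mset g D))"
    by (intro C_trans) simp
  thus ?case using IH by blast
qed

end


context ahs begin

lemma para: "g \<in> H \<Longrightarrow> h \<in> H \<Longrightarrow>
  (nrm (\<lambda>z. g z - h z))\<^sup>2 + (nrm (\<lambda>z. g z + h z))\<^sup>2 = 2 * (nrm g)\<^sup>2 + 2 * (nrm h)\<^sup>2"
proof -
  assume g: "g \<in> H" and h: "h \<in> H"
  have 1: "ip (\<lambda>z. g z - h z) (\<lambda>z. g z - h z) = ip g g - ip g h - (ip h g - ip h h)"
    using ip_sub1[OF g h Hsub[OF g h]] ip_sub2[OF g h g] ip_sub2[OF g h h] by simp
  have 2: "ip (\<lambda>z. g z + h z) (\<lambda>z. g z + h z) = ip g g + ip g h + (ip h g + ip h h)"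
    using ip_add1[OF g h Hadd[OF g h]] ip_add2[OF g h g] ip_add2[OF g h h] by simp
  show ?thesis using nrm_sq[OF Hsub[OF g h]] nrm_sq[OF Hadd[OF g h]] nrm_sq[OF g] nrm_sq[OF h] 1 2
    by simp
qed

lemma var:
  assumes y: "y \<in> H" and x: "x \<in> H" and min: "\<And>t. nrm y \<le> nrm (\<lambda>z. y z - t * x z)"
  shows "ip x y = 0"
proof (cases "nrm x = 0")
  case True
  hence "x = (\<lambda>z. 0)" using nrm_eq0[OF x] by simp
  thus ?thesis using ip_01[OF y] by simp
next
  case False
  define a where "a = ip y x"
  define nx where "nx = (nrm x)\<^sup>2"
  have nxpos: "nx > 0" using False nrm_ge0[OF x] unfolding nx_def by simp
  define t where "t = a / complex_of_real nx"
  define v where "v = (\<lambda>z. y z - t * x z)"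
  have v: "v \<in> H" unfolding v_def by (intro Hsub y Hsc x)
  have "ip v v = ip y v - t * ip x v"
    using ip_sub1[OF y Hsc[OF x] v] ip_sc1[OF x v] by (simp add: v_def)
  also have "ip y v = ip y y - cnj t * ip y x"
    unfolding v_def using ip_sub2[OF y Hsc[OF x] y] ip_sc2[OF x y] by simp
  also have "ip x v = ip x y - cnj t * ip x x"
    unfolding v_def using ip_sub2[OF y Hsc[OF x] x] ip_sc2[OF x x] by simp
  finally have "ip v v = of_real ((nrm y)\<^sup>2) - cnj t * a - t * (cnj a - cnj t * of_real nx)"
    using ip_self[OF y] ip_self[OF x] ip_cnj[OF y x] unfolding a_def nx_def by simp
  also have "\<dots> = of_real ((nrm y)\<^sup>2) - (a * cnj a) / of_real nx"
    unfolding t_def using nxpos by (simp add: field_simps)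
  also have "\<dots> = of_real ((nrm y)\<^sup>2 - (cmod a)\<^sup>2 / nx)"
    using nxpos by (simp add: complex_norm_square[symmetric])
  finally have "(nrm v)\<^sup>2 = (nrm y)\<^sup>2 - (cmod a)\<^sup>2 / nx" using nrm_sq[OF v] by simp
  moreover have "(nrm y)\<^sup>2 \<le> (nrm v)\<^sup>2" using min[of t] nrm_ge0[OF y] unfolding v_def
    by (simp add: power_mono)
  ultimately have "(cmod a)\<^sup>2 / nx \<le> 0" by simp
  hence "(cmod a)\<^sup>2 \<le> 0" using nxpos by (simp add: divide_le_0_iff)
  hence "a = 0" by simp
  thus ?thesis using ip_cnj[OF y x] unfolding a_def by simp
qed

lemma riesz:
  fixes L :: "complex poly \<Rightarrow> complex"
  assumes ladd: "\<And>p q. L (p + q) = L p + L q" and lsc: "\<And>c p. L (smult c p) = c * L p"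
    and bnd: "\<And>p. cmod (L p) \<le> K * nrm (rp p)"
  shows "\<exists>k\<in>H. \<forall>p. ip (rp p) k = L p"
proof (cases "\<forall>p. L p = 0")
  case True
  thus ?thesis using ip_02[OF rp_H] H0 by auto
next
  case False
  then obtain p1 where p1: "L p1 \<noteq> 0" by blast
  define p0 where "p0 = smult (1 / L p1) p1"
  have Lp0: "L p0 = 1" unfolding p0_def lsc using p1 by simp
  have L0: "L 0 = 0" using lsc[of 0 0] by simp
  have ldiff: "L (p - q) = L p - L q" for p q
    using ladd[of "p - q" q] by simp
  define d where "d n = nrm (rp (p0 - n))" for n
  define S where "S = d ` {n. L n = 0}"
  define \<delta> where "\<delta> = Inf S"
  have Sne: "S \<noteq> {}" unfolding S_def using L0 by auto
  have dlow: "1 \<le> K * d n" if "L n = 0" for n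
    using bnd[of "p0 - n"] unfolding d_def ldiff Lp0 that by simp
  have Kpos: "K > 0"
  proof (rule ccontr)
    assume "\<not> K > 0"
    hence "K * d 0 \<le> 0" using nrm_ge0[OF rp_H] unfolding d_def by (simp add: mult_nonpos_nonneg)
    thus False using dlow[OF L0] by simp
  qed
  have bdd: "bdd_below S" unfolding S_def d_def using nrm_ge0[OF rp_H] by (intro bdd_belowI) auto
  have dge: "\<delta> \<le> d n" if "L n = 0" for n
    unfolding \<delta>_def using bdd that by (intro cInf_lower) (auto simp: S_def)
  have \<delta>pos: "\<delta> \<ge> 1 / K"
    unfolding \<delta>_def using Sne dlow Kpos by (intro cInf_greatest) (auto simp: S_def field_simps)
  moreover have "1 / K > 0" using Kpos by simp
  ultimately have \<delta>pos': "\<delta> > 0" by linarith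
  define \<epsilon> where "\<epsilon> j = inverse (real (Suc j))" for j
  have \<epsilon>pos: "\<epsilon> j > 0" for j unfolding \<epsilon>_def by simp
  have "\<exists>n. L n = 0 \<and> (d n)\<^sup>2 < \<delta>\<^sup>2 + \<epsilon> j" for j
  proof -
    have "sqrt (\<delta>\<^sup>2) < sqrt (\<delta>\<^sup>2 + \<epsilon> j)"
      unfolding real_sqrt_less_iff using \<epsilon>pos[of j] by simp
    hence "\<delta> < sqrt (\<delta>\<^sup>2 + \<epsilon> j)" using \<delta>pos' by simp
    then obtain x where "x \<in> S" "x < sqrt (\<delta>\<^sup>2 + \<epsilon> j)" using cInf_lessD[OF Sne] unfolding \<delta>_def by blast
    then obtain n where n: "L n = 0" "d n < sqrt (\<delta>\<^sup>2 + \<epsilon> j)" unfolding S_def by blast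
    have "0 \<le> d n" unfolding d_def by (rule nrm_ge0[OF rp_H])
    hence "(d n)\<^sup>2 < (sqrt (\<delta>\<^sup>2 + \<epsilon> j))\<^sup>2" using n(2) by (intro power_strict_mono) auto
    hence "(d n)\<^sup>2 < \<delta>\<^sup>2 + \<epsilon> j" using \<epsilon>pos[of j] by (simp add: less_imp_le)
    thus ?thesis using n(1) by blast
  qed
  then obtain ns where ns: "\<And>j. L (ns j) = 0" "\<And>j. (d (ns j))\<^sup>2 < \<delta>\<^sup>2 + \<epsilon> j"
    using choice[of "\<lambda>j n. L n = 0 \<and> (d n)\<^sup>2 < \<delta>\<^sup>2 + \<epsilon> j"] by blast
  have cb: "(nrm (rp (ns i - ns j)))\<^sup>2 \<le> 2 * \<epsilon> i + 2 * \<epsilon> j" for i j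
  proof -
    define m where "m = smult (1/2) (ns i + ns j)"
    have Lm: "L m = 0" unfolding m_def lsc ladd ns by simp
    have e1: "(\<lambda>z. rp (p0 - ns i) z - rp (p0 - ns j) z) = rp (ns j - ns i)"
      unfolding rp_sub by (simp add: algebra_simps)
    have e2: "(\<lambda>z. rp (p0 - ns i) z + rp (p0 - ns j) z) = (\<lambda>z. 2 * rp (p0 - m) z)"
    proof -
      have "p0 - ns i + (p0 - ns j) = smult 2 (p0 - m)" unfolding m_def
        by (simp add: poly_eq_poly_eq_iff[symmetric] fun_eq_iff algebra_simps)
      thus ?thesis unfolding rp_add rp_sc by simp
    qed
    have "(nrm (rp (ns j - ns i)))\<^sup>2 + (2 * d m)\<^sup>2 = 2 * (d (ns i))\<^sup>2 + 2 * (d (ns j))\<^sup>2"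
      using para[OF rp_H rp_H, of "p0 - ns i" "p0 - ns j"] unfolding e1 e2 nrm_sc[OF rp_H] d_def by simp
    moreover have "\<delta>\<^sup>2 \<le> (d m)\<^sup>2" using dge[OF Lm] \<delta>pos' by (simp add: power_mono)
    moreover have "nrm (rp (ns j - ns i)) = nrm (rp (ns i - ns j))"
      using nrm_sub_sym[OF rp_H rp_H, of "ns j" "ns i"] unfolding rp_sub .
    hence "(nrm (rp (ns j - ns i)))\<^sup>2 = (nrm (rp (ns i - ns j)))\<^sup>2" by simp
    moreover have "(2 * d m)\<^sup>2 = 4 * (d m)\<^sup>2" by (simp add: power_mult_distrib)
    ultimately show ?thesis using ns(2)[of i] ns(2)[of j] by linarith
  qed
  have cauchy: "\<forall>e>0. \<exists>N. \<forall>m\<ge>N. \<forall>n\<ge>N. hdist ip (rp (ns m)) (rp (ns n)) < e"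
  proof (intro allI impI)
    fix e :: real assume e: "e > 0"
    have e4: "e\<^sup>2 / 4 > 0" using e by simp
    obtain N where N: "N > 0" "inverse (real N) < e\<^sup>2 / 4" using ex_inverse_of_nat_less[OF e4] by blast
    have "\<forall>m\<ge>N. \<forall>n\<ge>N. hdist ip (rp (ns m)) (rp (ns n)) < e"
    proof (intro allI impI)
      fix m n assume mn: "N \<le> m" "N \<le> n"
      have i1: "inverse (real (Suc m)) \<le> inverse (real N)"
        by (rule le_imp_inverse_le) (use N(1) mn in auto)
      have i2: "inverse (real (Suc n)) \<le> inverse (real N)"
        by (rule le_imp_inverse_le) (use N(1) mn in auto)
      have em: "\<epsilon> m < e\<^sup>2 / 4" "\<epsilon> n < e\<^sup>2 / 4" unfolding \<epsilon>_def using N(2) i1 i2 by linarith+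
      have hd: "hdist ip (rp (ns m)) (rp (ns n)) = nrm (rp (ns m - ns n))"
        unfolding hdist_def rp_sub ..
      have "(nrm (rp (ns m - ns n)))\<^sup>2 < e\<^sup>2"
        using cb[of m n] em by linarith
      hence "nrm (rp (ns m - ns n)) < e"
        by (rule power_less_imp_less_base) (use e in linarith)
      thus "hdist ip (rp (ns m)) (rp (ns n)) < e" unfolding hd .
    qed
    thus "\<exists>N. \<forall>m\<ge>N. \<forall>n\<ge>N. hdist ip (rp (ns m)) (rp (ns n)) < e" by blast
  qed
  obtain w where w: "w \<in> H" "(\<lambda>n. hdist ip (rp (ns n)) w) \<longlonglongrightarrow> 0"
    using complete[OF rp_H cauchy] by blast
  define hd where "hd n = hdist ip (rp (ns n)) w" for n
  have hd: "hd \<longlonglongrightarrow> 0" using w(2) unfolding hd_def .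
  define y where "y = (\<lambda>z. rp p0 z - w z)"
  have y: "y \<in> H" unfolding y_def by (intro Hsub rp_H w(1))
  have ny1: "nrm y \<le> sqrt (\<delta>\<^sup>2 + \<epsilon> j) + hd j" for j
  proof -
    have "nrm y \<le> nrm (\<lambda>z. rp p0 z - rp (ns j) z) + nrm (\<lambda>z. rp (ns j) z - w z)"
      unfolding y_def by (rule nrm_tri[OF rp_H rp_H w(1)])
    moreover have "nrm (\<lambda>z. rp p0 z - rp (ns j) z) \<le> sqrt (\<delta>\<^sup>2 + \<epsilon> j)"
      using ns(2)[of j] unfolding rp_sub d_def by (intro real_le_rsqrt) simp
    ultimately show ?thesis unfolding hd_def hdist_def by simp
  qed
  have "(\<lambda>j. sqrt (\<delta>\<^sup>2 + \<epsilon> j) + hd j) \<longlonglongrightarrow> sqrt (\<delta>\<^sup>2 + 0) + 0"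
    unfolding \<epsilon>_def by (intro tendsto_intros LIMSEQ_inverse_real_of_nat hd)
  hence "nrm y \<le> sqrt (\<delta>\<^sup>2 + 0) + 0"
    by (rule LIMSEQ_le_const) (use ny1 in blast)
  hence ny: "nrm y \<le> \<delta>" using \<delta>pos' by simp
  have ny2: "\<delta> \<le> nrm (\<lambda>z. y z - t * rp n z)" if Ln: "L n = 0" for n t
  proof -
    have "\<delta> \<le> nrm (\<lambda>z. y z - t * rp n z) + hd j" for j
    proof -
      have "L (ns j + smult t n) = 0" using ladd lsc ns(1) Ln by simp
      hence "\<delta> \<le> d (ns j + smult t n)" by (rule dge)
      also have "d (ns j + smult t n) = nrm (\<lambda>z. (\<lambda>z. y z - t * rp n z) z - (\<lambda>z. rp (ns j) z - w z) z)"
        unfolding d_def y_def by (rule arg_cong[of _ _ nrm], rule ext, case_tac "z \<in> Om") (simp_all add: restr_def ring_distribs)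
      also have "\<dots> \<le> nrm (\<lambda>z. y z - t * rp n z) + nrm (\<lambda>z. rp (ns j) z - w z)"
        by (rule nrm_sub[OF Hsub[OF y Hsc[OF rp_H]] Hsub[OF rp_H w(1)]])
      finally show ?thesis unfolding hd_def hdist_def .
    qed
    moreover have "(\<lambda>j. nrm (\<lambda>z. y z - t * rp n z) + hd j) \<longlonglongrightarrow> nrm (\<lambda>z. y z - t * rp n z) + 0"
      by (intro tendsto_intros hd)
    ultimately have "\<delta> \<le> nrm (\<lambda>z. y z - t * rp n z) + 0"
      by (intro LIMSEQ_le_const[of _ "nrm (\<lambda>z. y z - t * rp n z) + 0"]) blast+
    thus ?thesis by simp
  qed
  have orth: "ip (rp n) y = 0" if "L n = 0" for n
    using ny ny2[OF that] by (intro var[OF y rp_H]) (meson order_trans)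
  have nyd: "nrm y = \<delta>" using ny ny2[OF L0, of 0] by (simp add: rp_0)
  have wy: "ip w y = 0"
  proof -
    have "cmod (ip w y) \<le> hd j * nrm y" for j
    proof -
      have "ip w y = ip (\<lambda>z. w z - rp (ns j) z) y + ip (rp (ns j)) y"
        using ip_sub1[OF w(1) rp_H y] by simp
      also have "ip (rp (ns j)) y = 0" by (rule orth[OF ns(1)])
      finally have "cmod (ip w y) \<le> nrm (\<lambda>z. w z - rp (ns j) z) * nrm y"
        using CS[OF Hsub[OF w(1) rp_H] y] by simp
      thus ?thesis unfolding hd_def hdist_def using nrm_sub_sym[OF w(1) rp_H] by simp
    qed
    note bound = this
    have lim: "(\<lambda>j. hd j * nrm y) \<longlonglongrightarrow> 0 * nrm y" by (intro tendsto_intros hd)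
    have "cmod (ip w y) \<le> 0 * nrm y" by (rule LIMSEQ_le_const[OF lim]) (use bound in blast)
    thus ?thesis by simp
  qed
  have p0y: "ip (rp p0) y = of_real (\<delta>\<^sup>2)"
  proof -
    have "rp p0 = (\<lambda>z. y z + w z)" unfolding y_def by simp
    hence "ip (rp p0) y = ip y y + ip w y" using ip_add1[OF y w(1) y] by simp
    thus ?thesis using wy ip_self[OF y] nyd by simp
  qed
  have gen: "ip (rp p) y = L p * of_real (\<delta>\<^sup>2)" for p
  proof -
    have "L (p - smult (L p) p0) = 0" using ldiff lsc Lp0 by simp
    hence "0 = ip (rp (p - smult (L p) p0)) y" using orth by simp
    also have "rp (p - smult (L p) p0) = (\<lambda>z. rp p z - (\<lambda>z. L p * rp p0 z) z)"
      by (rule ext) (simp add: restr_def)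
    also have "ip \<dots> y = ip (rp p) y - L p * ip (rp p0) y"
      using ip_sub1[OF rp_H Hsc[OF rp_H] y] ip_sc1[OF rp_H y] by simp
    finally show ?thesis using p0y by simp
  qed
  define k where "k = (\<lambda>z. complex_of_real (1 / \<delta>\<^sup>2) * y z)"
  have kH: "k \<in> H" unfolding k_def by (rule Hsc[OF y])
  have "ip (rp p) k = L p" for p
  proof -
    have "ip (rp p) k = cnj (complex_of_real (1 / \<delta>\<^sup>2)) * ip (rp p) y"
      unfolding k_def by (rule ip_sc2[OF y rp_H])
    also have "\<dots> = complex_of_real (1 / \<delta>\<^sup>2) * (L p * of_real (\<delta>\<^sup>2))"
      by (simp only: gen complex_cnj_complex_of_real)
    also have "\<dots> = L p" using \<delta>pos' by (simp add: field_simps)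
    finally show ?thesis .
  qed
  thus ?thesis using kH by blast
qed

end


lemma Xid3: "q = [:c:] + X * r \<Longrightarrow> r * (X * a) = q * a - smult c (a::complex poly)"
  by (simp add: algebra_simps)

context ahs begin

lemma kern_prop:
  assumes "reproducible Om ip l b"
  shows "kern Om H ip l b \<in> H \<and> (\<forall>p. ip (rp p) (kern Om H ip l b) = E l p b)"
proof -
  obtain K where K: "\<forall>p. cmod (E l p b) \<le> K * nrm (rp p)"
    using assms unfolding reproducible_def by blast
  have "\<exists>k\<in>H. \<forall>p. ip (rp p) k = E l p b"
    by (rule riesz[where K=K]) (simp_all add: pd_add pd_smult K)
  hence "\<exists>k. k \<in> H \<and> (\<forall>p. ip (rp p) k = E l p b)" by blast
  thus ?thesis unfolding kern_def by (rule someI_ex)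
qed

definition KS where "KS M = {kern Om H ip l b | b l. b \<in># M \<and> l < count M b}"
definition perpK where "perpK M = {g \<in> H. \<forall>k\<in>KS M. ip g k = 0}"

lemma small_zero:
  assumes "\<And>e. e > 0 \<Longrightarrow> x \<le> e * c" "c \<ge> 0" "x \<ge> 0" shows "x = (0::real)"
proof (rule ccontr)
  assume "x \<noteq> 0"
  hence xp: "x > 0" using assms(3) by simp
  have "x \<le> x / (c + 1) * c" using assms(1)[of "x / (c+1)"] xp assms(2) by simp
  also have "\<dots> < x / (c + 1) * (c + 1)" using xp assms(2) by (intro mult_strict_left_mono) auto
  also have "\<dots> = x" using assms(2) by simp
  finally show False by simp
qed

lemma part_i:
  assumes "\<And>b l. l < count M b \<Longrightarrow> reproducible Om ip l b \<and> l < order b f"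
  shows "C f \<subseteq> perpK M"
proof
  fix g assume g: "g \<in> C f"
  have gH: "g \<in> H" using g C_H by auto
  have "ip g k = 0" if kK: "k \<in> KS M" for k
  proof -
    obtain b l where bl: "k = kern Om H ip l b" "l < count M b" using kK unfolding KS_def by blast
    have kp: "k \<in> H" "\<forall>p. ip (rp p) k = E l p b" using kern_prop assms[OF bl(2)] bl(1) by auto
    have "cmod (ip g k) \<le> e * nrm k" if e: "e > 0" for e
    proof -
      obtain q where q: "nrm (\<lambda>z. g z - rp (q * f) z) < e" using g e unfolding C_def by blast
      have "ip (rp (q * f)) k = 0" using kp(2) P3 assms[OF bl(2)] by simp
      hence "ip g k = ip (\<lambda>z. g z - rp (q * f) z) k" using ip_sub1[OF gH rp_H kp(1)] by simp
      hence "cmod (ip g k) \<le> nrm (\<lambda>z. g z - rp (q * f) z) * nrm k" using CS[OF Hsub[OF gH rp_H] kp(1)] by simp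
      also have "\<dots> \<le> e * nrm k" using q nrm_ge0[OF kp(1)] by (intro mult_right_mono) auto
      finally show ?thesis .
    qed
    hence "cmod (ip g k) = 0" using small_zero nrm_ge0[OF kp(1)] by (meson norm_ge_zero)
    thus ?thesis by simp
  qed
  thus "g \<in> perpK M" unfolding perpK_def using gH by auto
qed

lemma part_ii:
  "(\<And>b l. l < count M b \<Longrightarrow> reproducible Om ip l b) \<Longrightarrow> perpK M \<subseteq> C (prodX M)"
proof (induction M)
  case empty
  show ?case unfolding perpK_def using C_one by auto
next
  case (add b M)
  define m where "m = count M b"
  have IH: "perpK M \<subseteq> C (prodX M)"
    using add.prems by (intro add.IH) (metis count_add_mset less_SucI)
  have sub: "KS M \<subseteq> KS (add_mset b M)" unfolding KS_def
    by (auto simp: less_Suc_eq intro: less_SucI) 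
  have rep: "reproducible Om ip m b" using add.prems[of m b] unfolding m_def by simp
  define k0 where "k0 = kern Om H ip m b"
  have k0: "k0 \<in> H" "\<forall>p. ip (rp p) k0 = E m p b" using kern_prop[OF rep] unfolding k0_def by auto
  have k0K: "k0 \<in> KS (add_mset b M)" unfolding KS_def k0_def m_def by auto
  define a where "a = prodX M"
  define u where "u = prodX {#y \<in># M. y \<noteq> b#}"
  have au: "a = [:-b,1:] ^ m * u" unfolding a_def u_def m_def by (rule prodX_decomp)
  have ub: "poly u b \<noteq> 0" unfolding u_def prodX_root by simp
  show ?case
  proof
    fix g assume g: "g \<in> perpK (add_mset b M)"
    have gH: "g \<in> H" using g unfolding perpK_def by auto
    have gk0: "ip g k0 = 0" using g k0K unfolding perpK_def by auto
    have "g \<in> perpK M" using g sub unfolding perpK_def by auto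
    hence gC: "g \<in> C a" using IH unfolding a_def by auto
    define c0 where "c0 = fact m * cmod (poly u b)"
    have c0: "c0 > 0" unfolding c0_def using ub by simp
    define A where "A = nrm (rp a)"
    define Kk where "Kk = nrm k0"
    have A0: "A \<ge> 0" "Kk \<ge> 0" unfolding A_def Kk_def using nrm_ge0 rp_H k0 by auto
    have "\<exists>r. nrm (\<lambda>z. g z - rp (r * prodX (add_mset b M)) z) < e" if e: "e > 0" for e
    proof -
      define e' where "e' = e / (1 + Kk * A / c0)"
      have den: "1 + Kk * A / c0 > 0" using A0 c0 by (simp add: add_pos_nonneg)
      have e': "e' > 0" unfolding e'_def using e den by simp
      obtain q where q: "nrm (\<lambda>z. g z - rp (q * a) z) < e'" using gC e' unfolding C_def by blast
      have Eq: "E m (q * a) b = fact m * poly u b * poly q b"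
      proof -
        have eq: "q * a = [:-b,1:] ^ m * (u * q)" unfolding au by (simp add: algebra_simps)
        show ?thesis unfolding eq P1 by simp
      qed
      have "ip (rp (q * a)) k0 = ip (rp (q * a)) k0 - ip g k0" using gk0 by simp
      also have "\<dots> = ip (\<lambda>z. rp (q * a) z - g z) k0" using ip_sub1[OF rp_H gH k0(1)] by simp
      finally have "cmod (E m (q * a) b) \<le> nrm (\<lambda>z. rp (q * a) z - g z) * Kk"
        using k0(2) CS[OF Hsub[OF rp_H gH] k0(1)] unfolding Kk_def by simp
      also have "\<dots> \<le> e' * Kk" using q A0 nrm_sub_sym[OF gH rp_H] by (intro mult_right_mono) auto
      finally have "c0 * cmod (poly q b) \<le> e' * Kk" unfolding Eq c0_def by (simp add: norm_mult)
      hence qb: "cmod (poly q b) \<le> e' * Kk / c0" using c0 by (simp add: field_simps)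
      obtain r where r: "q = [:poly q b:] + [:-b,1:] * r" using split_root by blast
      have pa: "r * prodX (add_mset b M) = q * a - smult (poly q b) a"
        unfolding a_def using Xid3[OF r, of "prodX M"] by simp
      have eqg: "(\<lambda>z. g z - rp (r * prodX (add_mset b M)) z) =
          (\<lambda>z. (\<lambda>z. g z - rp (q * a) z) z + (\<lambda>z. poly q b * rp a z) z)"
        unfolding pa by (rule ext) (simp add: restr_def algebra_simps)
      have "nrm (\<lambda>z. g z - rp (r * prodX (add_mset b M)) z) \<le> nrm (\<lambda>z. g z - rp (q * a) z) + nrm (\<lambda>z. poly q b * rp a z)"
        unfolding eqg by (rule nrm_add[OF Hsub[OF gH rp_H] Hsc[OF rp_H]])
      also have "nrm (\<lambda>z. poly q b * rp a z) = cmod (poly q b) * A" unfolding A_def by (rule nrm_sc[OF rp_H])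
      also have "nrm (\<lambda>z. g z - rp (q * a) z) + cmod (poly q b) * A < e' + e' * Kk / c0 * A"
        using q qb A0 by (intro add_less_le_mono mult_right_mono) auto
      also have "\<dots> = e' * (1 + Kk * A / c0)" by (simp add: algebra_simps)
      also have "\<dots> = e" unfolding e'_def using den by simp
      finally show ?thesis by blast
    qed
    thus "g \<in> C (prodX (add_mset b M))" unfolding C_def using gH by auto
  qed
qed

end


lemma pdX0: "pderiv X = 1 \<Longrightarrow>
  (pderiv ^^ Suc k) (X * p) = smult (of_nat (Suc k)) ((pderiv ^^ k) p) + X * (pderiv ^^ Suc k) (p :: complex poly)"
proof (induction k)
  case 0 thus ?case by (simp add: pderiv_mult)
next
  case (Suc k)
  have "(pderiv ^^ Suc (Suc k)) (X * p) = pderiv ((pderiv ^^ Suc k) (X * p))" by simp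
  also have "\<dots> = pderiv (smult (of_nat (Suc k)) ((pderiv ^^ k) p) + X * (pderiv ^^ Suc k) p)"
    using Suc by simp
  also have "\<dots> = smult (of_nat (Suc (Suc k))) ((pderiv ^^ Suc k) p) + X * (pderiv ^^ Suc (Suc k)) p"
    using Suc.prems by (simp add: pderiv_add pderiv_smult pderiv_mult algebra_simps) (rule poly_eqI, simp add: algebra_simps)
  finally show ?case .
qed

lemma EX: "E (Suc k) ([:-b,1:] * p) b = of_nat (Suc k) * E k p (b::complex)"
  using pdX0[of "[:-b,1:]" k p] by (simp add: pderiv_pCons)

context ahs begin

lemma repr_Suc: assumes "reproducible Om ip (Suc j) b" shows "reproducible Om ip j b"
proof -
  obtain K where K: "\<forall>p. cmod (E (Suc j) p b) \<le> K * nrm (rp p)" using assms unfolding reproducible_def by blast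
  obtain B where B: "B \<ge> 0" "\<forall>x\<in>H. nrm (\<lambda>z. poly [:-b,1:] z * x z) \<le> B * nrm x" using mult_bound by blast
  have "cmod (E j p b) \<le> max K 0 * B * nrm (rp p)" for p
  proof -
    have "of_nat (Suc j) * cmod (E j p b) = cmod (E (Suc j) ([:-b,1:] * p) b)"
      unfolding EX by (simp only: norm_mult norm_of_nat)
    also have "\<dots> \<le> K * nrm (rp ([:-b,1:] * p))" using K by blast
    also have "\<dots> \<le> max K 0 * nrm (rp ([:-b,1:] * p))" using nrm_ge0[OF rp_H] by (intro mult_right_mono) auto
    also have "\<dots> \<le> max K 0 * (B * nrm (rp p))"
      using B(2) rp_H[of p] unfolding rp_mult[symmetric] by (intro mult_left_mono) auto
    finally have "of_nat (Suc j) * cmod (E j p b) \<le> max K 0 * B * nrm (rp p)" by simp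
    moreover have "cmod (E j p b) \<le> of_nat (Suc j) * cmod (E j p b)"
      using mult_right_mono[of 1 "of_nat (Suc j)" "cmod (E j p b)"] by simp
    ultimately show ?thesis by linarith
  qed
  thus ?thesis unfolding reproducible_def by blast
qed

lemma repr_le: "reproducible Om ip m b \<Longrightarrow> j \<le> m \<Longrightarrow> reproducible Om ip j b"
proof (induction m)
  case 0 thus ?case by simp
next
  case (Suc m)
  show ?case
  proof (cases "j = Suc m")
    case True thus ?thesis using Suc by simp
  next
    case False thus ?thesis using Suc repr_Suc by simp
  qed
qed

lemma R1: assumes "l < rmult Om ip f b" shows "reproducible Om ip l b"
proof -
  have c: "reproducible Om ip 0 b" "order b f \<ge> 1"
    and r: "rmult Om ip f b = the_enat (min (enat (order b f)) (ro Om ip b + 1))"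
    using assms unfolding rmult_def by (auto split: if_splits)
  obtain x where x: "min (enat (order b f)) (ro Om ip b + 1) = enat x"
  proof -
    have "min (enat (order b f)) (ro Om ip b + 1) \<le> enat (order b f)" by simp
    thus ?thesis using enat_ile that by blast
  qed
  have "enat l < enat x" using assms r x by simp
  hence lt: "enat l < ro Om ip b + 1" using x by (metis min.cobounded2 order_less_le_trans)
  show ?thesis
  proof (rule ccontr)
    assume nr: "\<not> reproducible Om ip l b"
    have "l \<ge> 1" using nr c(1) by (cases l) auto
    have "\<forall>m\<in>{m. reproducible Om ip m b}. enat m \<le> enat (l - 1)"
    proof
      fix m assume "m \<in> {m. reproducible Om ip m b}"
      hence "m < l" using nr repr_le by (metis mem_Collect_eq not_le)
      thus "enat m \<le> enat (l - 1)" by simp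
    qed
    hence "ro Om ip b \<le> enat (l - 1)" unfolding ro_def by (intro SUP_least) auto
    hence "ro Om ip b + 1 \<le> enat (l - 1) + 1" by (rule add_right_mono)
    also have "enat (l - 1) + 1 = enat l" using \<open>l \<ge> 1\<close> by (simp add: one_enat_def)
    finally show False using lt by simp
  qed
qed

lemma R2: "rmult Om ip f b \<le> order b f"
proof (cases "reproducible Om ip 0 b \<and> order b f \<ge> 1")
  case True
  obtain x where x: "min (enat (order b f)) (ro Om ip b + 1) = enat x"
  proof -
    have "min (enat (order b f)) (ro Om ip b + 1) \<le> enat (order b f)" by simp
    thus ?thesis using enat_ile that by blast
  qed
  have "enat x \<le> enat (order b f)" unfolding x[symmetric] by simp
  thus ?thesis using True x unfolding rmult_def by simp
qed (auto simp: rmult_def)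

lemma R3: assumes "rmult Om ip f b < order b f" shows "bp b (rmult Om ip f b)"
proof (cases "reproducible Om ip 0 b \<and> order b f \<ge> 1")
  case False
  hence "rmult Om ip f b = 0" unfolding rmult_def by auto
  thus ?thesis using False assms unfolding bp_def by auto
next
  case True
  define r where "r = rmult Om ip f b"
  obtain x where x: "min (enat (order b f)) (ro Om ip b + 1) = enat x"
  proof -
    have "min (enat (order b f)) (ro Om ip b + 1) \<le> enat (order b f)" by simp
    thus ?thesis using enat_ile that by blast
  qed
  have rx: "r = x" using True x unfolding r_def rmult_def by simp
  have "\<not> reproducible Om ip r b"
  proof
    assume "reproducible Om ip r b"
    hence "enat r \<le> ro Om ip b" unfolding ro_def by (intro SUP_upper) auto
    hence "enat r < ro Om ip b + 1"
      by (cases "ro Om ip b") (auto simp: one_enat_def)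
    moreover have "enat r < enat (order b f)" using assms r_def by simp
    ultimately have "enat r < min (enat (order b f)) (ro Om ip b + 1)" by simp
    thus False using x rx by simp
  qed
  moreover have "\<forall>i<r. reproducible Om ip i b" using R1 r_def by blast
  ultimately show ?thesis unfolding bp_def r_def by blast
qed

lemma count_Rz: assumes "f \<noteq> 0" shows "count (Rz Om ip f) b = rmult Om ip f b"
proof -
  have fin: "finite {x. poly f x = 0}" using poly_roots_finite[OF assms] .
  have "count (Rz Om ip f) b = (\<Sum>x\<in>{x. poly f x = 0}. if x = b then rmult Om ip f x else 0)"
    unfolding Rz_def count_sum by (intro sum.cong) auto
  also have "\<dots> = (if b \<in> {x. poly f x = 0} then rmult Om ip f b else 0)"
    using fin by (simp add: sum.delta)
  also have "\<dots> = rmult Om ip f b"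
  proof (cases "poly f b = 0")
    case False
    hence "order b f = 0" by (simp add: order_root)
    thus ?thesis using False unfolding rmult_def by simp
  qed simp
  finally show ?thesis .
qed

end


context ahs begin

lemma fspan_f: "fspan {(\<lambda>z. z ^ k * rp f z) | k::nat. True} = {rp (q * f) | q. True}"
proof
  show "fspan {(\<lambda>z. z ^ k * rp f z) | k::nat. True} \<subseteq> {rp (q * f) | q. True}"
  proof
    fix h assume "h \<in> fspan {(\<lambda>z. z ^ k * rp f z) | k::nat. True}"
    hence "\<exists>n c g. (\<forall>i<(n::nat). g i \<in> {(\<lambda>z. z ^ k * rp f z) | k::nat. True}) \<and> h = (\<lambda>z. \<Sum>i<n. c i * g i z)"
      unfolding fspan_def by simp
    then obtain n c g where ngh: "(\<forall>i<(n::nat). g i \<in> {(\<lambda>z. z ^ k * rp f z) | k::nat. True}) \<and> h = (\<lambda>z. \<Sum>i<n. c i * g i z)"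
      by blast
    hence ng: "\<forall>i<n. g i \<in> {(\<lambda>z. z ^ k * rp f z) | k::nat. True}"
      and h: "h = (\<lambda>z. \<Sum>i<n. c i * g i z)" by auto
    have "\<forall>i. \<exists>k. i < n \<longrightarrow> g i = (\<lambda>z. z ^ k * rp f z)" using ng by blast
    then obtain kk where kk: "\<And>i. i < n \<Longrightarrow> g i = (\<lambda>z. z ^ kk i * rp f z)" by metis
    have "h = rp ((\<Sum>i<n. monom (c i) (kk i)) * f)"
    proof (rule ext)
      fix z
      have "h z = (\<Sum>i<n. c i * (z ^ kk i * rp f z))" unfolding h using kk by simp
      also have "\<dots> = rp ((\<Sum>i<n. monom (c i) (kk i)) * f) z"
        by (simp add: restr_def poly_sum poly_monom sum_distrib_right sum_distrib_left mult_ac)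
      finally show "h z = rp ((\<Sum>i<n. monom (c i) (kk i)) * f) z" .
    qed
    thus "h \<in> {rp (q * f) | q. True}" by blast
  qed
next
  show "{rp (q * f) | q. True} \<subseteq> fspan {(\<lambda>z. z ^ k * rp f z) | k::nat. True}"
  proof
    fix h assume "h \<in> {rp (q * f) | q. True}"
    then obtain q where h: "h = rp (q * f)" by blast
    have "h = (\<lambda>z. \<Sum>i<Suc (degree q). coeff q i * (\<lambda>i z. z ^ i * rp f z) i z)"
    proof (rule ext)
      fix z
      show "h z = (\<Sum>i<Suc (degree q). coeff q i * (\<lambda>i z. z ^ i * rp f z) i z)"
      proof -
        have "h z = poly q z * rp f z" unfolding h by (simp add: restr_def)
        also have "\<dots> = (\<Sum>i\<le>degree q. coeff q i * z ^ i) * rp f z" by (simp only: poly_altdef)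
        also have "\<dots> = (\<Sum>i\<le>degree q. coeff q i * (z ^ i * rp f z))" by (simp add: sum_distrib_right mult.assoc)
        finally show ?thesis by (simp add: lessThan_Suc_atMost)
      qed
    qed
    moreover have "\<forall>i<Suc (degree q). (\<lambda>i z. z ^ i * rp f z) i \<in> {(\<lambda>z. z ^ k * rp f z) | k::nat. True}"
      by (intro allI impI CollectI) (rule exI, rule conjI, rule refl, rule TrueI)
    ultimately show "h \<in> fspan {(\<lambda>z. z ^ k * rp f z) | k::nat. True}"
      unfolding fspan_def mem_Collect_eq
      by (rule_tac x="Suc (degree q)" in exI, rule_tac x="coeff q" in exI, rule_tac x="\<lambda>i z. z ^ i * rp f z" in exI) simp
  qed
qed

lemma cyc_eq: "cyc H ip (rp f) = C f"
  unfolding cyc_def hclosure_def fspan_f C_def hdist_def by blast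

lemma fsum_H: "(\<forall>i<(n::nat). gg i \<in> H) \<Longrightarrow> (\<lambda>z. \<Sum>i<n. c i * gg i z) \<in> H \<and>
   (\<forall>g\<in>H. ip g (\<lambda>z. \<Sum>i<n. c i * gg i z) = (\<Sum>i<n. cnj (c i) * ip g (gg i)))"
proof (induction n)
  case 0 thus ?case using H0 ip_02 by simp
next
  case (Suc n)
  have IH: "(\<lambda>z. \<Sum>i<n. c i * gg i z) \<in> H"
    "\<forall>g\<in>H. ip g (\<lambda>z. \<Sum>i<n. c i * gg i z) = (\<Sum>i<n. cnj (c i) * ip g (gg i))"
    using Suc by auto
  have gn: "gg n \<in> H" using Suc.prems by simp
  have eq: "(\<lambda>z. \<Sum>i<Suc n. c i * gg i z) = (\<lambda>z. (\<lambda>z. \<Sum>i<n. c i * gg i z) z + (\<lambda>z. c n * gg n z) z)"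
    by simp
  show ?case unfolding eq
    using Hadd[OF IH(1) Hsc[OF gn]] ip_add2[OF IH(1) Hsc[OF gn]] ip_sc2[OF gn] IH(2) by simp
qed

lemma perp_eq: assumes "K \<subseteq> H" shows "perp H ip (fspan K) = {g \<in> H. \<forall>k\<in>K. ip g k = 0}"
proof
  show "perp H ip (fspan K) \<subseteq> {g \<in> H. \<forall>k\<in>K. ip g k = 0}"
  proof
    fix g assume g: "g \<in> perp H ip (fspan K)"
    have "k \<in> fspan K" if "k \<in> K" for k
    proof -
      have "k = (\<lambda>z. \<Sum>i<(1::nat). (\<lambda>_. 1) i * (\<lambda>_. k) i z)" by (simp add: card_lessThan)
      thus ?thesis unfolding fspan_def mem_Collect_eq
        by (rule_tac x=1 in exI, rule_tac x="\<lambda>_. 1" in exI, rule_tac x="\<lambda>_. k" in exI) (simp add: that)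
    qed
    thus "g \<in> {g \<in> H. \<forall>k\<in>K. ip g k = 0}" using g unfolding perp_def by auto
  qed
next
  show "{g \<in> H. \<forall>k\<in>K. ip g k = 0} \<subseteq> perp H ip (fspan K)"
  proof
    fix g assume g: "g \<in> {g \<in> H. \<forall>k\<in>K. ip g k = 0}"
    have "ip g h = 0" if hK: "h \<in> fspan K" for h
    proof -
      have "\<exists>n c gg. (\<forall>i<(n::nat). gg i \<in> K) \<and> h = (\<lambda>z. \<Sum>i<n. c i * gg i z)"
        using hK unfolding fspan_def by simp
      then obtain n c gg where ngh: "(\<forall>i<(n::nat). gg i \<in> K) \<and> h = (\<lambda>z. \<Sum>i<n. c i * gg i z)" by blast
      hence ng: "\<forall>i<n. gg i \<in> K" and h: "h = (\<lambda>z. \<Sum>i<n. c i * gg i z)" by auto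
      have "\<forall>i<n. gg i \<in> H" using ng assms by auto
      from fsum_H[OF this, of c] g have "ip g h = (\<Sum>i<n. cnj (c i) * ip g (gg i))" unfolding h by auto
      also have "\<dots> = 0" using ng g by simp
      finally show ?thesis .
    qed
    thus "g \<in> perp H ip (fspan K)" unfolding perp_def using g by auto
  qed
qed

lemma main:
  assumes "f \<noteq> 0"
  shows "cyc H ip (rp f) = cyc H ip (rp (\<Prod>\<beta>\<in>#Rz Om ip f. [:-\<beta>, 1:]))
       \<and> cyc H ip (rp f) = perp H ip (fspan {kern Om H ip l \<beta> | \<beta> l. \<beta> \<in># Rz Om ip f \<and> l < count (Rz Om ip f) \<beta>})"
proof -
  define A where "A = Rz Om ip f"
  define B where "B = proots f"
  have cA: "count A b = rmult Om ip f b" for b unfolding A_def by (rule count_Rz[OF assms])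
  have cB: "count B b = order b f" for b unfolding B_def using assms by simp
  have AB: "A \<subseteq># B" unfolding subseteq_mset_def cA cB using R2 by blast
  have ABD: "A + (B - A) = B" using AB by (rule subset_mset.add_diff_inverse)
  have "rp (prodX A) \<in> C (prodX (A + (B - A)))"
    by (rule part_iii) (use ABD cA cB R3 in auto)
  hence "C (prodX A) \<subseteq> C (prodX B)" using ABD C_trans by simp
  also have "C (prodX B) = C f"
  proof -
    have "f = smult (lead_coeff f) (prodX B)" unfolding B_def by (rule complex_poly_decompose_multiset[symmetric])
    hence "C f = C (smult (lead_coeff f) (prodX B))" by simp
    also have "\<dots> = C (prodX B)" using assms by (intro C_smult) simp
    finally show ?thesis by simp
  qed
  finally have s1: "C (prodX A) \<subseteq> C f" .
  have rep: "reproducible Om ip l b \<and> l < order b f" if "l < count A b" for b l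
    using that R1 R2 cA by (metis order_less_le_trans)
  have s2: "C f \<subseteq> perpK A" by (rule part_i) (use rep in blast)
  have s3: "perpK A \<subseteq> C (prodX A)" by (rule part_ii) (use rep in blast)
  have KH: "KS A \<subseteq> H" unfolding KS_def using kern_prop rep by auto
  have e1: "C f = C (prodX A)" using s1 s2 s3 by blast
  have e2: "C f = perpK A" using s1 s2 s3 by blast
  show ?thesis
    unfolding cyc_eq A_def[symmetric] using e1 e2 perp_eq[OF KH] unfolding perpK_def KS_def by simp
qed

end


theorem mainTheorem7:
  fixes \<Omega> :: "complex set" and H :: "(complex \<Rightarrow> complex) set"
    and ip :: "(complex \<Rightarrow> complex) \<Rightarrow> (complex \<Rightarrow> complex) \<Rightarrow> complex"
    and f :: "complex poly"
  assumes "AHS \<Omega> H ip" and "f \<noteq> 0"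
  shows "cyc H ip (restr \<Omega> (poly f))
           = cyc H ip (restr \<Omega> (poly (\<Prod>\<beta>\<in>#Rz \<Omega> ip f. [:-\<beta>, 1:])))
       \<and> cyc H ip (restr \<Omega> (poly f))
           = perp H ip (fspan {kern \<Omega> H ip l \<beta> | \<beta> l. \<beta> \<in># Rz \<Omega> ip f \<and> l < count (Rz \<Omega> ip f) \<beta>})"
proof -
  interpret ahs \<Omega> H ip by (rule ahs.intro) (rule assms(1))
  show ?thesis by (rule main[OF assms(2)])
qed

end
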